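(* Let $A=\{a_0,a_1,\dots,a_{k-1}\}\subseteq\mathcal{C}_n$ with $a_0<\dots<a_{k-1}$, and assume the simplex $\sigma^{(n)}_k(A)$ is internal, i.e. $0\notin A$ and $n-1\notin A$. Let $m\in\{0,\dots,k-1\}$. Then the set $\mathcal{DN}^{\,2}_m=\{\overline{a_m}\}\cup\mathcal{L}^{n-1}_{a_m}\left(\sigma^{(n)}_k(A)\right)\cup\mathcal{L}^{n-2}_{a_m}\left(\sigma^{(n)}_k(A)\right)$ is a subsemiring of $\sigma^{(n)}_k(A)$.
   Context: $\mathcal{C}_n=\{0,1,\dots,n-1\}$ with its usual order; $\widehat{\mathcal{E}}_{\mathcal{C}_n}$ is the set of all order-preserving maps $\mathcal{C}_n\to\mathcal{C}_n$ (not required to fix $0$), a semiring with $(\alpha+\beta)(x)=\max(\alpha(x),\beta(x))$ and $(\alpha\cdot\beta)(x)=\beta(\alpha(x))$. The simplex $\sigma^{(n)}_k(A)$ is the set of all $\alpha\in\widehat{\mathcal{E}}_{\mathcal{C}_n}$ with $\mathrm{im}(\alpha)\subseteq A$. $\overline{x}$ is the constant map with value $x$. For $s\in\{0,\dots,n-1\}$, the layer $\mathcal{L}^{s}_{a_m}\left(\sigma^{(n)}_k(A)\right)$ is the set of $\alpha\in\sigma^{(n)}_k(A)$ with exactly $s$ elements $i\in\mathcal{C}_n$ satisfying $\alpha(i)=a_m$. *)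

theory Defs
  imports Main "HOL-Library.FuncSet"
begin

text \<open>Order-preserving maps C_n -> C_n, C_n = {0..<n}, represented as
  extensional functions on {0..<n}.\<close>
definition endos :: "nat \<Rightarrow> (nat \<Rightarrow> nat) set" where
  "endos n = {\<alpha> \<in> extensional {0..<n}. \<alpha> ` {0..<n} \<subseteq> {0..<n} \<and> mono_on {0..<n} \<alpha>}"

definition splus :: "nat \<Rightarrow> (nat \<Rightarrow> nat) \<Rightarrow> (nat \<Rightarrow> nat) \<Rightarrow> (nat \<Rightarrow> nat)" where
  "splus n \<alpha> \<beta> = (\<lambda>x\<in>{0..<n}. max (\<alpha> x) (\<beta> x))"

definition stimes :: "nat \<Rightarrow> (nat \<Rightarrow> nat) \<Rightarrow> (nat \<Rightarrow> nat) \<Rightarrow> (nat \<Rightarrow> nat)" where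
  "stimes n \<alpha> \<beta> = (\<lambda>x\<in>{0..<n}. \<beta> (\<alpha> x))"

definition simplex :: "nat \<Rightarrow> nat set \<Rightarrow> (nat \<Rightarrow> nat) set" where
  "simplex n A = {\<alpha> \<in> endos n. \<alpha> ` {0..<n} \<subseteq> A}"

definition const_map :: "nat \<Rightarrow> nat \<Rightarrow> (nat \<Rightarrow> nat)" where
  "const_map n x = (\<lambda>_\<in>{0..<n}. x)"

definition layer :: "nat \<Rightarrow> nat \<Rightarrow> nat \<Rightarrow> (nat \<Rightarrow> nat) set \<Rightarrow> (nat \<Rightarrow> nat) set" where
  "layer n s a S = {\<alpha> \<in> S. card {i \<in> {0..<n}. \<alpha> i = a} = s}"

definition subsemiring :: "nat \<Rightarrow> (nat \<Rightarrow> nat) set \<Rightarrow> (nat \<Rightarrow> nat) set \<Rightarrow> bool" where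
  "subsemiring n T S \<longleftrightarrow> T \<noteq> {} \<and> T \<subseteq> S \<and>
     (\<forall>\<alpha>\<in>T. \<forall>\<beta>\<in>T. splus n \<alpha> \<beta> \<in> T \<and> stimes n \<alpha> \<beta> \<in> T)"

end

theory Submission
  imports Defs
begin

definition NA :: "nat \<Rightarrow> nat \<Rightarrow> (nat \<Rightarrow> nat) \<Rightarrow> nat set" where
  "NA n a \<alpha> = {i\<in>{0..<n}. \<alpha> i \<noteq> a}"

lemma simplexD:
  assumes "\<alpha> \<in> simplex n A"
  shows "\<alpha> \<in> extensional {0..<n}" "\<And>i. i < n \<Longrightarrow> \<alpha> i \<in> A" "\<And>i. i < n \<Longrightarrow> \<alpha> i < n"
    "\<And>i j. i \<le> j \<Longrightarrow> j < n \<Longrightarrow> \<alpha> i \<le> \<alpha> j"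
  using assms unfolding simplex_def endos_def mono_on_def by (auto simp: image_subset_iff)

lemma simplexI:
  assumes "\<alpha> \<in> extensional {0..<n}" "\<And>i. i < n \<Longrightarrow> \<alpha> i \<in> A" "A \<subseteq> {0..<n}"
    "\<And>i j. i \<le> j \<Longrightarrow> j < n \<Longrightarrow> \<alpha> i \<le> \<alpha> j"
  shows "\<alpha> \<in> simplex n A"
  using assms unfolding simplex_def endos_def mono_on_def by auto

lemma key:
  assumes "\<alpha> \<in> simplex n A" "card (NA n a \<alpha>) \<le> 2" "0 \<notin> A" "n - 1 \<notin> A" "a \<in> A" "A \<subseteq> {0..<n}"
  shows "\<alpha> a = a"
proof -
  have an: "a < n" using assms by auto
  have fin: "finite (NA n a \<alpha>)" unfolding NA_def by auto
  have aA: "\<alpha> a \<in> A" using simplexD(2)[OF assms(1) an] .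
  have lt: "\<alpha> a < n" using simplexD(3)[OF assms(1) an] .
  show ?thesis
  proof (rule ccontr)
    assume ne: "\<alpha> a \<noteq> a"
    show False
    proof (cases "\<alpha> a < a")
      case True
      have "{0..a} \<subseteq> NA n a \<alpha>"
      proof
        fix i assume "i \<in> {0..a}"
        hence "i \<le> a" by simp
        hence "\<alpha> i \<le> \<alpha> a" using simplexD(4)[OF assms(1) _ an] by blast
        thus "i \<in> NA n a \<alpha>" using True an \<open>i \<le> a\<close> unfolding NA_def by auto
      qed
      hence "card {0..a} \<le> card (NA n a \<alpha>)" by (rule card_mono[OF fin])
      hence "card {0..a} \<le> 2" using assms(2) by linarith
      hence "a \<le> 1" by simp
      moreover have "a \<noteq> 0" using assms(3,5) by metis
      ultimately have "a = 1" by simp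
      hence "\<alpha> a = 0" using True by simp
      thus False using aA assms(3) by simp
    next
      case False
      hence gt: "\<alpha> a > a" using ne by simp
      have "{a..<n} \<subseteq> NA n a \<alpha>"
      proof
        fix i assume "i \<in> {a..<n}"
        hence "a \<le> i" "i < n" by auto
        hence "\<alpha> a \<le> \<alpha> i" using simplexD(4)[OF assms(1)] by blast
        thus "i \<in> NA n a \<alpha>" using gt \<open>i < n\<close> unfolding NA_def by auto
      qed
      hence "card {a..<n} \<le> card (NA n a \<alpha>)" by (rule card_mono[OF fin])
      hence "card {a..<n} \<le> 2" using assms(2) by linarith
      hence "n - a \<le> 2" by simp
      hence "\<alpha> a = n - 1" using gt lt by linarith
      thus False using aA assms(4) by simp
    qed
  qed
qed

lemma upchain:
  fixes H1 H2 :: "nat set"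
  assumes "\<And>i j. i \<le> j \<Longrightarrow> j < n \<Longrightarrow> i \<in> H1 \<Longrightarrow> j \<in> H1"
    "\<And>i j. i \<le> j \<Longrightarrow> j < n \<Longrightarrow> i \<in> H2 \<Longrightarrow> j \<in> H2"
    "H1 \<subseteq> {0..<n}" "H2 \<subseteq> {0..<n}"
  shows "H1 \<subseteq> H2 \<or> H2 \<subseteq> H1"
proof (rule ccontr)
  assume "\<not> ?thesis"
  then obtain x y where "x \<in> H1" "x \<notin> H2" "y \<in> H2" "y \<notin> H1" by blast
  note xy = this
  have "x < n" "y < n" using xy assms(3,4) by auto
  show False
  proof (cases "x \<le> y")
    case True thus False using assms(1)[of x y] xy \<open>y < n\<close> by blast
  next
    case False thus False using assms(2)[of y x] xy \<open>x < n\<close> by simp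
  qed
qed

lemma downchain:
  fixes H1 H2 :: "nat set"
  assumes "\<And>i j. i \<le> j \<Longrightarrow> j \<in> H1 \<Longrightarrow> i \<in> H1"
    "\<And>i j. i \<le> j \<Longrightarrow> j \<in> H2 \<Longrightarrow> i \<in> H2"
  shows "H1 \<subseteq> H2 \<or> H2 \<subseteq> H1"
proof (rule ccontr)
  assume "\<not> ?thesis"
  then obtain x y where "x \<in> H1" "x \<notin> H2" "y \<in> H2" "y \<notin> H1" by blast
  note xy = this
  show False
  proof (cases "x \<le> y")
    case True thus False using assms(2)[of x y] xy by blast
  next
    case False thus False using assms(1)[of y x] xy by simp
  qed
qed

lemma splus_NA:
  assumes "\<alpha> \<in> simplex n A" "\<beta> \<in> simplex n A"
    "card (NA n a \<alpha>) \<le> 2" "card (NA n a \<beta>) \<le> 2"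
  shows "card (NA n a (splus n \<alpha> \<beta>)) \<le> 2"
proof -
  define L where "L \<gamma> = {i\<in>{0..<n}. \<gamma> i < a}" for \<gamma> :: "nat \<Rightarrow> nat"
  define H where "H \<gamma> = {i\<in>{0..<n}. \<gamma> i > a}" for \<gamma> :: "nat \<Rightarrow> nat"
  have split: "card (NA n a \<gamma>) = card (L \<gamma>) + card (H \<gamma>)" for \<gamma>
  proof -
    have "NA n a \<gamma> = L \<gamma> \<union> H \<gamma>" unfolding NA_def L_def H_def by auto
    moreover have "L \<gamma> \<inter> H \<gamma> = {}" unfolding L_def H_def by auto
    ultimately show ?thesis by (simp add: L_def H_def card_Un_disjoint)
  qed
  have fL: "finite (L \<gamma>)" "finite (H \<gamma>)" for \<gamma> unfolding L_def H_def by auto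
  let ?s = "splus n \<alpha> \<beta>"
  have Ls: "L ?s = L \<alpha> \<inter> L \<beta>" unfolding L_def splus_def by auto
  have Hs: "H ?s = H \<alpha> \<union> H \<beta>" unfolding H_def splus_def by auto
  have Hc: "H \<alpha> \<subseteq> H \<beta> \<or> H \<beta> \<subseteq> H \<alpha>"
    apply (rule upchain[where n=n])
    using simplexD(4)[OF assms(1)] simplexD(4)[OF assms(2)] unfolding H_def
       apply auto
    using less_le_trans by blast+
  have Lc: "L \<alpha> \<subseteq> L \<beta> \<or> L \<beta> \<subseteq> L \<alpha>"
    apply (rule downchain)
    using simplexD(4)[OF assms(1)] simplexD(4)[OF assms(2)] unfolding L_def
     apply auto
    using le_less_trans by blast+
  have c1: "card (L \<alpha>) + card (H \<alpha>) \<le> 2" "card (L \<beta>) + card (H \<beta>) \<le> 2"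
    using assms split by auto
  show ?thesis
  proof (cases "H \<alpha> \<subseteq> H \<beta>")
    case True
    hence "H ?s = H \<beta>" using Hs by auto
    moreover have "card (L ?s) \<le> card (L \<beta>)" using Ls fL by (simp add: card_mono)
    ultimately show ?thesis using split c1 by simp
  next
    case False
    hence "H ?s = H \<alpha>" using Hs Hc by auto
    moreover have "card (L ?s) \<le> card (L \<alpha>)" using Ls fL by (simp add: card_mono)
    ultimately show ?thesis using split c1 by simp
  qed
qed

lemma splus_simplex:
  assumes "\<alpha> \<in> simplex n A" "\<beta> \<in> simplex n A" "A \<subseteq> {0..<n}"
  shows "splus n \<alpha> \<beta> \<in> simplex n A"
  apply (rule simplexI[OF _ _ assms(3)])
    apply (simp add: splus_def)
   apply (simp add: splus_def max_def simplexD(2)[OF assms(1)] simplexD(2)[OF assms(2)])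
  apply (simp add: splus_def)
  using simplexD(4)[OF assms(1)] simplexD(4)[OF assms(2)] by (metis max.coboundedI1 max.coboundedI2)

lemma stimes_simplex:
  assumes "\<alpha> \<in> simplex n A" "\<beta> \<in> simplex n A" "A \<subseteq> {0..<n}"
  shows "stimes n \<alpha> \<beta> \<in> simplex n A"
  apply (rule simplexI[OF _ _ assms(3)])
    apply (simp add: stimes_def)
   apply (simp add: stimes_def simplexD(2)[OF assms(2)] simplexD(3)[OF assms(1)])
  apply (simp add: stimes_def)
  using simplexD(4)[OF assms(1)] simplexD(4)[OF assms(2)] simplexD(3)[OF assms(1)] by auto

lemma stimes_NA:
  assumes "\<beta> a = a" "card (NA n a \<alpha>) \<le> 2"
  shows "card (NA n a (stimes n \<alpha> \<beta>)) \<le> 2"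
proof -
  have "NA n a (stimes n \<alpha> \<beta>) \<subseteq> NA n a \<alpha>"
    unfolding NA_def stimes_def using assms(1) by auto
  moreover have "finite (NA n a \<alpha>)" unfolding NA_def by auto
  ultimately show ?thesis using assms(2) by (meson card_mono le_trans)
qed

lemma count_split:
  "card {i \<in> {0..<n}. \<alpha> i = a} + card (NA n a \<alpha>) = n"
proof -
  have "{i \<in> {0..<n}. \<alpha> i = a} \<union> NA n a \<alpha> = {0..<n}" "{i \<in> {0..<n}. \<alpha> i = a} \<inter> NA n a \<alpha> = {}"
    unfolding NA_def by auto
  thus ?thesis by (metis card_Un_disjoint card_atLeastLessThan finite_Un finite_atLeastLessThan minus_nat.diff_0)
qed

theorem proposition4:
  fixes n k m :: nat and A :: "nat set"
  assumes "A \<subseteq> {0..<n}" and "card A = k"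
    and "0 \<notin> A" and "n - 1 \<notin> A"
    and "m < k"
  shows "subsemiring n
     ({const_map n (sorted_list_of_set A ! m)}
      \<union> layer n (n - 1) (sorted_list_of_set A ! m) (simplex n A)
      \<union> layer n (n - 2) (sorted_list_of_set A ! m) (simplex n A))
     (simplex n A)"
proof -
  define a where "a = sorted_list_of_set A ! m"
  have finA: "finite A" using assms(1) finite_subset by blast
  have aA: "a \<in> A" unfolding a_def
    using assms(2,5) finA by (metis length_sorted_list_of_set nth_mem set_sorted_list_of_set)
  have cs: "const_map n a \<in> simplex n A"
    by (rule simplexI[OF _ _ assms(1)]) (auto simp: const_map_def aA)
  have T: "{const_map n a} \<union> layer n (n - 1) a (simplex n A) \<union> layer n (n - 2) a (simplex n A)
      = {\<alpha> \<in> simplex n A. card (NA n a \<alpha>) \<le> 2}" (is "?L = ?R")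
  proof
    show "?L \<subseteq> ?R"
    proof
      fix \<alpha> assume "\<alpha> \<in> ?L"
      moreover have "NA n a (const_map n a) = {}" unfolding NA_def const_map_def by auto
      ultimately show "\<alpha> \<in> ?R" using cs count_split[of n \<alpha> a] unfolding layer_def by auto
    qed
  next
    show "?R \<subseteq> ?L"
    proof
      fix \<alpha> assume R: "\<alpha> \<in> ?R"
      have cnt: "card {i \<in> {0..<n}. \<alpha> i = a} + card (NA n a \<alpha>) = n" by (rule count_split)
      show "\<alpha> \<in> ?L"
      proof (cases "card (NA n a \<alpha>) = 0")
        case True
        hence "NA n a \<alpha> = {}" unfolding NA_def by auto
        hence "\<alpha> = const_map n a" using simplexD(1)[of \<alpha> n A] R
          unfolding NA_def const_map_def extensional_def by (auto simp: fun_eq_iff)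
        thus ?thesis by simp
      next
        case False
        thus ?thesis using R cnt unfolding layer_def by auto
      qed
    qed
  qed
  show ?thesis
    unfolding a_def[symmetric] T subsemiring_def
  proof (intro conjI ballI)
    have "NA n a (const_map n a) = {}" unfolding NA_def const_map_def by auto
    thus "{\<alpha> \<in> simplex n A. card (NA n a \<alpha>) \<le> 2} \<noteq> {}" using cs by auto
  next
    show "{\<alpha> \<in> simplex n A. card (NA n a \<alpha>) \<le> 2} \<subseteq> simplex n A" by auto
  next
    fix \<alpha> \<beta> assume a1: "\<alpha> \<in> {\<alpha> \<in> simplex n A. card (NA n a \<alpha>) \<le> 2}"
      and b1: "\<beta> \<in> {\<alpha> \<in> simplex n A. card (NA n a \<alpha>) \<le> 2}"
    show "splus n \<alpha> \<beta> \<in> {\<alpha> \<in> simplex n A. card (NA n a \<alpha>) \<le> 2}"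
      using a1 b1 splus_NA splus_simplex assms(1) by auto
    have "\<beta> a = a" using key[of \<beta> n A a] b1 assms aA by auto
    thus "stimes n \<alpha> \<beta> \<in> {\<alpha> \<in> simplex n A. card (NA n a \<alpha>) \<le> 2}"
      using a1 b1 stimes_NA stimes_simplex assms(1) by auto
  qed
qed

end
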